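(* Let $R$ be an associative unital division ring over a field $F$ of characteristic $0$, $\lambda\in F$, and $v_{m,n}\in R$ invertible for all $(m,n)\in\mathbb{Z}^2$. Define $$\mathcal{L}_{m,n}=\begin{pmatrix}-v_{m,n}^{-1} & \lambda\\ 1 & -v_{m,n}\end{pmatrix},\qquad \mathcal{M}_{m,n}=\begin{pmatrix}v_{m+1,n}-v_{m,n}^{-1} & \lambda\\ 1 & 0\end{pmatrix}.$$ If the compatibility condition $\mathcal{L}_{m+1,n}\mathcal{M}_{m,n}=\mathcal{M}_{m,n+1}\mathcal{L}_{m,n}$ of the system $\Psi_{m,n+1}=\mathcal{L}_{m,n}\Psi_{m,n}$, $\Psi_{m+1,n}=\mathcal{M}_{m,n}\Psi_{m,n}$ holds for all $(m,n)$, then for all $(m,n)$ $$v_{m+1,n+1}-v_{m,n}=v_{m,n+1}^{-1}-v_{m+1,n}^{-1}.$$ *)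

theory Defs
  imports Main
begin

text \<open>2x2 matrices over a (possibly noncommutative) ring, entries (a11, a12, a21, a22).\<close>
type_synonym 'r mat2 = "'r \<times> 'r \<times> 'r \<times> 'r"

fun mat2_mult :: "'r::ring mat2 \<Rightarrow> 'r mat2 \<Rightarrow> 'r mat2" where
  "mat2_mult (a, b, c, d) (e, f, g, h) =
     (a * e + b * g, a * f + b * h, c * e + d * g, c * f + d * h)"

text \<open>R is an algebra over the field F: a unital ring homomorphism F \<rightarrow> R with central image.\<close>
definition algebra_map :: "('f::field \<Rightarrow> 'r::ring_1) \<Rightarrow> bool" where
  "algebra_map phi \<longleftrightarrow> phi 1 = 1 \<and> (\<forall>a b. phi (a + b) = phi a + phi b)
     \<and> (\<forall>a b. phi (a * b) = phi a * phi b) \<and> (\<forall>a x. phi a * x = x * phi a)"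

definition Lmat :: "('f::field \<Rightarrow> 'r::division_ring) \<Rightarrow> 'f \<Rightarrow> (int \<Rightarrow> int \<Rightarrow> 'r) \<Rightarrow> int \<Rightarrow> int \<Rightarrow> 'r mat2" where
  "Lmat phi lam v m n = (- inverse (v m n), phi lam, 1, - v m n)"

definition Mmat :: "('f::field \<Rightarrow> 'r::division_ring) \<Rightarrow> 'f \<Rightarrow> (int \<Rightarrow> int \<Rightarrow> 'r) \<Rightarrow> int \<Rightarrow> int \<Rightarrow> 'r mat2" where
  "Mmat phi lam v m n = (v (m + 1) n - inverse (v m n), phi lam, 1, 0)"

end

theory Submission
  imports Defs
begin

theorem proposition5p1:
  fixes phi :: "'f::field_char_0 \<Rightarrow> 'r::division_ring"
    and lam :: 'f
    and v :: "int \<Rightarrow> int \<Rightarrow> 'r"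
  assumes alg: "algebra_map phi"
    and inv: "\<And>m n. v m n \<noteq> 0"
    and compat: "\<And>m n. mat2_mult (Lmat phi lam v (m + 1) n) (Mmat phi lam v m n)
                       = mat2_mult (Mmat phi lam v m (n + 1)) (Lmat phi lam v m n)"
  shows "\<forall>m n. v (m + 1) (n + 1) - v m n = inverse (v m (n + 1)) - inverse (v (m + 1) n)"
proof (intro allI)
  fix m n
  let ?a = "v (m+1) n" and ?b = "v m n" and ?c = "v (m+1) (n+1)" and ?d = "v m (n+1)"
  have "- inverse ?a * (?a - inverse ?b) + phi lam * 1 = (?c - inverse ?d) * (- inverse ?b) + phi lam * 1"
    using compat[of m n] by (simp add: Lmat_def Mmat_def)
  hence e: "- inverse ?a * (?a - inverse ?b) = (?c - inverse ?d) * (- inverse ?b)" by simp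
  have "- inverse ?a * (?a - inverse ?b) = - 1 + inverse ?a * inverse ?b"
    using inv[of "m+1" n] by (simp add: algebra_simps)
  with e have "(- 1 + inverse ?a * inverse ?b) * ?b = ((?c - inverse ?d) * (- inverse ?b)) * ?b" by simp
  hence "- ?b + inverse ?a = - (?c - inverse ?d)"
    using inv[of m n] by (simp add: algebra_simps mult.assoc)
  thus "?c - ?b = inverse ?d - inverse ?a" by (simp add: algebra_simps)
qed

end
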